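(* Let $d\ge1$. (i) The Brownian-time Brownian motion kernel $$K^{\mathrm{BTBM}}_{t;x}=2\int_0^\infty\frac{e^{-|x|^2/2s}}{(2\pi s)^{d/2}}\frac{e^{-s^2/2t}}{\sqrt{2\pi t}}\,ds,\quad t>0,$$ has spatial Fourier transform $$\hat K^{\mathrm{BTBM}}_{t;\xi}=(2\pi)^{-d/2}e^{\frac t8|\xi|^4}\Big[\frac{2}{\sqrt\pi}\int_{\sqrt{2t}|\xi|^2/4}^\infty e^{-\tau^2}d\tau\Big].$$ (ii) For $\varepsilon>0$, $\vartheta\in\mathbb R$, the $(\varepsilon,\vartheta)$ L-KS kernel $$K^{(\varepsilon,\vartheta)}_{t;x}=\int_{-\infty}^0\frac{e^{i\vartheta s}e^{-|x|^2/2is}}{(2\pi is)^{d/2}}\frac{e^{-s^2/2\varepsilon t}}{\sqrt{2\pi\varepsilon t}}ds+\int_0^\infty\frac{e^{i\vartheta s}e^{-|x|^2/2is}}{(2\pi is)^{d/2}}\frac{e^{-s^2/2\varepsilon t}}{\sqrt{2\pi\varepsilon t}}ds$$ has spatial Fourier transform $\hat K^{(\varepsilon,\vartheta)}_{t;\xi}=(2\pi)^{-d/2}e^{-\frac{\varepsilon t}{8}(-2\vartheta+|\xi|^2)^2}$.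
   Context: The spatial Fourier transform is taken in the symmetric convention $\hat f(\xi)=(2\pi)^{-d/2}\int_{\mathbb R^d}f(x)e^{-i\xi\cdot x}\,dx$. In (ii), $(2\pi is)^{d/2}$ is the principal branch, so that $e^{-|x|^2/2is}/(2\pi is)^{d/2}$ is the free Schrödinger propagator at imaginary time $is$, whose Fourier transform in $x$ is $(2\pi)^{-d/2}e^{-is|\xi|^2/2}$. *)

theory Defs
  imports "HOL-Analysis.Analysis"
begin

definition fourier :: "('a::euclidean_space \<Rightarrow> complex) \<Rightarrow> 'a \<Rightarrow> complex" where
  "fourier f \<xi> = complex_of_real ((2 * pi) powr (- real DIM('a) / 2)) *
      (LINT x|lborel. f x * exp (- \<i> * complex_of_real (\<xi> \<bullet> x)))"

definition btbm_kernel :: "real \<Rightarrow> 'a::euclidean_space \<Rightarrow> real" where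
  "btbm_kernel t x = 2 * (LINT s:{0<..}|lborel.
      exp (- (norm x)\<^sup>2 / (2 * s)) / (2 * pi * s) powr (real DIM('a) / 2)
      * (exp (- s\<^sup>2 / (2 * t)) / sqrt (2 * pi * t)))"

(* (ii) integrand of the (eps,theta) L-KS kernel at time t, imaginary time i s, point x:
   e^{i theta s} e^{-|x|^2/(2 i s)} / (2 pi i s)^{d/2}  *  e^{-s^2/(2 eps t)} / sqrt(2 pi eps t),
   with the principal branch of the complex power. *)
definition lks_integrand :: "real \<Rightarrow> real \<Rightarrow> real \<Rightarrow> real \<Rightarrow> 'a::euclidean_space \<Rightarrow> complex" where
  "lks_integrand \<epsilon> \<theta> t s x =
      exp (\<i> * complex_of_real (\<theta> * s)) * exp (- complex_of_real ((norm x)\<^sup>2) / (2 * \<i> * complex_of_real s))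
      / (2 * complex_of_real pi * \<i> * complex_of_real s) powr complex_of_real (real DIM('a) / 2)
      * complex_of_real (exp (- s\<^sup>2 / (2 * \<epsilon> * t)) / sqrt (2 * pi * \<epsilon> * t))"

(* The L-KS kernel K^{(eps,theta)}_t as a (tempered) distribution acting on a test function phi:
   <K, phi> = int_{-inf}^0 (int K-integrand(s,x) phi(x) dx) ds + int_0^inf (...) ds *)
definition lks_pairing :: "real \<Rightarrow> real \<Rightarrow> real \<Rightarrow> ('a::euclidean_space \<Rightarrow> complex) \<Rightarrow> complex" where
  "lks_pairing \<epsilon> \<theta> t \<phi> =
      (LINT s:{..0}|lborel. (LINT x|lborel. lks_integrand \<epsilon> \<theta> t s x * \<phi> x))
    + (LINT s:{0..}|lborel. (LINT x|lborel. lks_integrand \<epsilon> \<theta> t s x * \<phi> x))"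

end

theory Submission
  imports Defs "HOL-Probability.Probability" "HOL-Complex_Analysis.Complex_Analysis"
begin

lemma integrable_exp_neg_sq:
  fixes c :: real assumes c: "0 < c"
  shows "integrable lborel (\<lambda>u::real. exp (- c * u\<^sup>2))"
proof -
  define \<sigma> where "\<sigma> = sqrt (1 / (2 * c))"
  have s2: "\<sigma>\<^sup>2 = 1 / (2*c)" using c by (simp add: \<sigma>_def)
  have sp: "\<sigma> > 0" using c by (simp add: \<sigma>_def)
  have "integrable lborel (\<lambda>u. sqrt (2 * pi * \<sigma>\<^sup>2) * normal_density 0 \<sigma> u)"
    using sp by (intro integrable_mult_right integrable_normal_density) auto
  also have "(\<lambda>u. sqrt (2 * pi * \<sigma>\<^sup>2) * normal_density 0 \<sigma> u) = (\<lambda>u. exp (- c * u\<^sup>2))"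
    using c sp by (auto simp: normal_density_def s2 fun_eq_iff field_simps)
  finally show ?thesis .
qed

lemma norm_gauss_integrand:
  "norm (exp (- a * (complex_of_real u)\<^sup>2 - \<i> * complex_of_real (\<xi> * u))) = exp (- Re a * u\<^sup>2)"
  by (simp add: power2_eq_square)

lemma gauss_integrable:
  assumes "0 < Re a"
  shows "integrable lborel (\<lambda>u::real. exp (- a * (complex_of_real u)\<^sup>2 - \<i> * complex_of_real (\<xi> * u)))"
proof (rule Bochner_Integration.integrable_bound[OF integrable_exp_neg_sq[OF assms]])
  show "(\<lambda>u::real. exp (- a * (complex_of_real u)\<^sup>2 - \<i> * complex_of_real (\<xi> * u))) \<in> borel_measurable lborel"
    by measurable
  show "AE u in lborel. norm (exp (- a * (complex_of_real u)\<^sup>2 - \<i> * complex_of_real (\<xi> * u))) \<le> norm (exp (- Re a * u\<^sup>2))"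
    by (intro AE_I2, subst norm_gauss_integrand) simp
qed

lemma gauss_real:
  fixes c \<xi> :: real assumes c: "0 < c"
  shows "(LINT u|lborel. exp (- complex_of_real c * (complex_of_real u)\<^sup>2 - \<i> * complex_of_real (\<xi> * u)))
         = complex_of_real (sqrt (pi / c) * exp (- \<xi>\<^sup>2 / (4 * c)))"
proof -
  define k where "k = sqrt (2 * c)"
  define t where "t = - \<xi> / k"
  have k: "k > 0" "k\<^sup>2 = 2 * c" using c by (auto simp: k_def)
  define f where "f = (\<lambda>x. std_normal_density x *\<^sub>R exp (\<i> * complex_of_real (t * x)))"
  have "char std_normal_distribution t = (LINT x|lborel. f x)"
    unfolding char_def f_def
    by (rule integral_density) auto
  also have "\<dots> = \<bar>k\<bar> *\<^sub>R (LINT u|lborel. f (0 + k * u))"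
    by (rule lborel_integral_real_affine) (use k in simp)
  also have "(\<lambda>u. f (0 + k * u)) = (\<lambda>u. complex_of_real (1 / sqrt (2 * pi)) *
       exp (- complex_of_real c * (complex_of_real u)\<^sup>2 - \<i> * complex_of_real (\<xi> * u)))"
  proof
    fix u
    have e1: "(k*u)\<^sup>2 / 2 = c * u\<^sup>2" using k by (simp add: power_mult_distrib)
    have e2: "t * (k * u) = - \<xi> * u" using k by (simp add: t_def)
    have "f (0 + k * u) = complex_of_real (1 / sqrt (2 * pi) * exp (- (c * u\<^sup>2))) * exp (\<i> * complex_of_real (- \<xi> * u))"
      unfolding e1[symmetric] e2[symmetric] by (simp add: f_def std_normal_density_def scaleR_conv_of_real)
    then show "f (0 + k * u) = complex_of_real (1 / sqrt (2 * pi)) *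
       exp (- complex_of_real c * (complex_of_real u)\<^sup>2 - \<i> * complex_of_real (\<xi> * u))"
      by (simp add: exp_diff exp_minus exp_of_real[symmetric] field_simps)
  qed
  finally have eq: "char std_normal_distribution t = complex_of_real (k / sqrt (2 * pi)) *
     (LINT u|lborel. exp (- complex_of_real c * (complex_of_real u)\<^sup>2 - \<i> * complex_of_real (\<xi> * u)))"
    using k by (simp add: scaleR_conv_of_real)
  have "exp (- t\<^sup>2 / 2) = exp (- \<xi>\<^sup>2 / (4 * c))" using k c by (simp add: t_def power_divide)
  with eq have "complex_of_real (k / sqrt (2 * pi)) *
     (LINT u|lborel. exp (- complex_of_real c * (complex_of_real u)\<^sup>2 - \<i> * complex_of_real (\<xi> * u)))
     = complex_of_real (exp (- \<xi>\<^sup>2 / (4 * c)))"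
    by (simp add: char_std_normal_distribution)
  moreover have "sqrt (pi / c) = sqrt (2 * pi) / k" using c by (simp add: k_def real_sqrt_divide real_sqrt_mult)
  ultimately have "complex_of_real k * (LINT u|lborel. exp (- complex_of_real c * (complex_of_real u)\<^sup>2 - \<i> * complex_of_real (\<xi> * u)))
     = complex_of_real k * complex_of_real (sqrt (pi / c) * exp (- \<xi>\<^sup>2 / (4 * c)))"
    using k by (simp add: field_simps flip: of_real_mult)
  then show ?thesis using k by (subst (asm) mult_left_cancel) auto
qed


definition gF :: "real \<Rightarrow> complex \<Rightarrow> complex" where
  "gF \<xi> a = (LINT u|lborel. exp (- a * (complex_of_real u)\<^sup>2 - \<i> * complex_of_real (\<xi> * u)))"

lemma tail_to_zero:
  fixes c :: real assumes c: "0 < c"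
  shows "(\<lambda>n::nat. LINT u|lborel. indicator (- {- real n..real n}) u * exp (- c * u\<^sup>2)) \<longlonglongrightarrow> 0"
proof -
  have "(\<lambda>n::nat. LINT u|lborel. indicator (- {- real n..real n}) u * exp (- c * u\<^sup>2)) \<longlonglongrightarrow> integral\<^sup>L lborel (\<lambda>u::real. 0::real)"
  proof (rule integral_dominated_convergence[where w = "\<lambda>u. exp (- c * u\<^sup>2)" and f = "\<lambda>u. 0"
      and s = "\<lambda>n u. indicator (- {- real n..real n}) u * exp (- c * u\<^sup>2)"])
    show "integrable lborel (\<lambda>u. exp (- c * u\<^sup>2))" by (rule integrable_exp_neg_sq[OF c])
    show "AE u in lborel. (\<lambda>n::nat. indicator (- {- real n..real n}) u * exp (- c * u\<^sup>2)) \<longlonglongrightarrow> 0"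
    proof (intro AE_I2 tendsto_eventually)
      fix u :: real
      show "\<forall>\<^sub>F n in sequentially. indicator (- {- real n..real n}) u * exp (- c * u\<^sup>2) = 0"
        unfolding eventually_sequentially
      proof (intro exI[of _ "nat \<lceil>\<bar>u\<bar>\<rceil>"] allI impI)
        fix n assume "nat \<lceil>\<bar>u\<bar>\<rceil> \<le> n"
        then have "\<bar>u\<bar> \<le> real n" by linarith
        then show "indicator (- {- real n..real n}) u * exp (- c * u\<^sup>2) = 0" by (auto simp: indicator_def)
      qed
    qed
    show "\<And>n::nat. AE u in lborel. norm (indicator (- {- real n..real n}) u * exp (- c * u\<^sup>2)) \<le> exp (- c * u\<^sup>2)"
      by (intro AE_I2) (auto simp: indicator_def)
  qed auto
  then show ?thesis by simp
qed

lemma gF_holomorphic: "gF \<xi> holomorphic_on {a. 0 < Re a}"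
proof -
  define f where "f = (\<lambda>a (u::real). exp (- a * (complex_of_real u)\<^sup>2 - \<i> * complex_of_real (\<xi> * u)))"
  define fn where "fn = (\<lambda>(n::nat) a. integral (cbox (- real n) (real n)) (f a))"
  have fm[measurable]: "f a \<in> borel_measurable lborel" for a unfolding f_def by measurable
  have hol: "fn n holomorphic_on {a. 0 < Re a}" for n
    unfolding fn_def
  proof (rule leibniz_rule_holomorphic[where fx = "\<lambda>a u. - (complex_of_real u)\<^sup>2 * f a u"])
    fix a and u :: real
    show "((\<lambda>a. f a u) has_field_derivative - (complex_of_real u)\<^sup>2 * f a u) (at a within {a. 0 < Re a})"
      unfolding f_def by (auto intro!: derivative_eq_intros)
  next
    fix a show "f a integrable_on cbox (- real n) (real n)"
      unfolding f_def by (intro integrable_continuous continuous_intros)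
  next
    show "continuous_on ({a. 0 < Re a} \<times> cbox (- real n) (real n)) (\<lambda>(a, u). - (complex_of_real u)\<^sup>2 * f a u)"
      unfolding f_def by (auto simp: case_prod_beta intro!: continuous_intros)
  qed (rule convex_halfspace_Re_gt)
  show ?thesis
  proof (rule holomorphic_uniform_sequence[OF _ hol])
    show "open {a. 0 < Re a}" by (simp add: open_halfspace_Re_gt)
  next
    fix x assume x: "x \<in> {a. 0 < Re a}"
    define d where "d = Re x / 2"
    have d: "0 < d" using x by (simp add: d_def)
    have Rea: "d \<le> Re a" if "a \<in> cball x d" for a
    proof -
      have "\<bar>Re x - Re a\<bar> \<le> cmod (x - a)" using abs_Re_le_cmod[of "x - a"] by simp
      also have "\<dots> \<le> d" using that by (simp add: dist_norm)
      finally show ?thesis unfolding d_def using abs_ge_self[of "Re x - Re a"] by linarith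
    qed
    have sub: "cball x d \<subseteq> {a. 0 < Re a}" using Rea d by force
    have int: "integrable lborel (f a)" if "0 < Re a" for a
      unfolding f_def by (rule gauss_integrable[OF that])
    have "uniform_limit (cball x d) fn (gF \<xi>) sequentially"
      unfolding uniform_limit_iff
    proof (intro allI impI)
      fix e :: real assume e: "0 < e"
      from tail_to_zero[OF d] e obtain N where N: "\<And>n. n \<ge> N \<Longrightarrow>
          norm (LINT u|lborel. indicator (- {- real n..real n}) u * exp (- d * u\<^sup>2)) < e"
        unfolding LIMSEQ_iff by auto
      show "\<forall>\<^sub>F n in sequentially. \<forall>a\<in>cball x d. dist (fn n a) (gF \<xi> a) < e"
        unfolding eventually_sequentially
      proof (intro exI[of _ N] allI impI ballI)
        fix n a assume n: "N \<le> n" and a: "a \<in> cball x d"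
        have Ra: "0 < Re a" using sub a by auto
        have fint: "integrable lborel (f a)" by (rule int[OF Ra])
        have sint: "set_integrable lborel {- real n..real n} (f a)"
          unfolding set_integrable_def by (intro integrable_mult_indicator fint) auto
        have "fn n a = (LINT u:{- real n..real n}|lborel. f a u)"
          unfolding fn_def using set_borel_integral_eq_integral(2)[OF sint] by simp
        then have "gF \<xi> a - fn n a = (LINT u|lborel. f a u - indicator {- real n..real n} u *\<^sub>R f a u)"
          using sint fint unfolding set_lebesgue_integral_def set_integrable_def
          by (simp add: Bochner_Integration.integral_diff gF_def f_def)
        also have "\<dots> = (LINT u|lborel. indicator (- {- real n..real n}) u *\<^sub>R f a u)"
          by (rule Bochner_Integration.integral_cong) (auto simp: indicator_def)
        finally have eq: "gF \<xi> a - fn n a = (LINT u|lborel. indicator (- {- real n..real n}) u *\<^sub>R f a u)" .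
        have "norm (gF \<xi> a - fn n a) \<le> (LINT u|lborel. norm (indicator (- {- real n..real n}) u *\<^sub>R f a u))"
          unfolding eq by (rule integral_norm_bound)
        also have "\<dots> \<le> (LINT u|lborel. indicator (- {- real n..real n}) u * exp (- d * u\<^sup>2))"
        proof (rule integral_mono)
          show "integrable lborel (\<lambda>u. norm (indicator (- {- real n..real n}) u *\<^sub>R f a u))"
            by (intro integrable_norm integrable_mult_indicator fint) auto
          show "integrable lborel (\<lambda>u. indicator (- {- real n..real n}) u * exp (- d * u\<^sup>2))"
            using integrable_mult_indicator[OF _ integrable_exp_neg_sq[OF d], of "- {- real n..real n}"]
            by simp
          fix u :: real
          have "exp (- Re a * u\<^sup>2) \<le> exp (- d * u\<^sup>2)"
            using Rea[OF a] by (simp add: mult_right_mono)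
          then have ne: "norm (f a u) \<le> exp (- d * u\<^sup>2)"
            unfolding f_def norm_gauss_integrand .
          then show "norm (indicator (- {- real n..real n}) u *\<^sub>R f a u) \<le> indicator (- {- real n..real n}) u * exp (- d * u\<^sup>2)"
            by (auto simp: indicator_def simp del: norm_exp_eq_Re)
        qed
        also have "\<dots> < e" using N[OF n] by simp
        finally show "dist (fn n a) (gF \<xi> a) < e" by (simp add: dist_norm norm_minus_commute)
      qed
    qed
    then show "\<exists>d>0. cball x d \<subseteq> {a. 0 < Re a} \<and> uniform_limit (cball x d) fn (gF \<xi>) sequentially"
      using d sub by blast
  qed
qed


lemma Re_pi_div_pos: "0 < Re a \<Longrightarrow> 0 < Re (complex_of_real pi / a)"
proof -
  assume a: "0 < Re a"
  have "0 < Re a * Re a + Im a * Im a" using a by (simp add: add_pos_nonneg)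
  then show ?thesis using a by (simp add: Re_divide divide_pos_pos power2_eq_square)
qed

lemma gF_eq:
  assumes a: "0 < Re a"
  shows "gF \<xi> a = csqrt (complex_of_real pi / a) * exp (- (complex_of_real \<xi>)\<^sup>2 / (4 * a))"
proof -
  define G where "G = (\<lambda>a. csqrt (complex_of_real pi / a) * exp (- (complex_of_real \<xi>)\<^sup>2 / (4 * a)))"
  define H where "H = {a::complex. 0 < Re a}"
  have nz: "a \<noteq> 0" if "a \<in> H" for a using that by (auto simp: H_def)
  have "G holomorphic_on H"
    unfolding G_def
  proof (intro holomorphic_intros)
    fix z assume z: "z \<in> H"
    then show "z \<noteq> 0" by (rule nz)
    show "complex_of_real pi / z \<notin> \<real>\<^sub>\<le>\<^sub>0"
      using Re_pi_div_pos[of z] z by (auto simp: H_def complex_nonpos_Reals_iff)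
    show "4 * z \<noteq> 0" using nz[OF z] by simp
  qed
  then have hol: "(\<lambda>a. gF \<xi> a - G a) holomorphic_on H"
    using gF_holomorphic[of \<xi>] unfolding H_def by (intro holomorphic_intros) auto
  have "gF \<xi> a - G a = 0"
  proof (rule analytic_continuation[OF hol, where U = "complex_of_real ` {0<..}" and \<xi> = 1])
    show "open H" unfolding H_def by (simp add: open_halfspace_Re_gt)
    show "connected H" unfolding H_def by (simp add: convex_connected convex_halfspace_Re_gt)
    show "complex_of_real ` {0<..} \<subseteq> H" by (auto simp: H_def)
    show "1 \<in> H" by (simp add: H_def)
    show "a \<in> H" using a by (simp add: H_def)
    show "1 islimpt complex_of_real ` {0<..}"
      unfolding islimpt_approachable
    proof (intro allI impI)
      fix e :: real assume e: "0 < e"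
      show "\<exists>x'\<in>complex_of_real ` {0<..}. x' \<noteq> 1 \<and> dist x' 1 < e"
      proof (intro bexI[of _ "complex_of_real (1 + e/2)"] conjI)
        show "complex_of_real (1 + e/2) \<in> complex_of_real ` {0<..}" using e by (intro imageI) auto
        have "complex_of_real (1 + e/2) - 1 = complex_of_real (e/2)" by simp
        then have "dist (complex_of_real (1 + e/2)) 1 = \<bar>e/2\<bar>" unfolding dist_norm norm_of_real by simp
        then show "dist (complex_of_real (1 + e/2)) 1 < e" using e by simp
        show "complex_of_real (1 + e/2) \<noteq> 1" using e by (simp add: complex_eq_iff)
      qed
    qed
    fix z assume "z \<in> complex_of_real ` {0<..}"
    then obtain c where c: "0 < c" and z: "z = complex_of_real c" by auto
    have "gF \<xi> z = complex_of_real (sqrt (pi / c) * exp (- \<xi>\<^sup>2 / (4 * c)))"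
      unfolding z gF_def by (rule gauss_real[OF c])
    moreover have "G z = complex_of_real (sqrt (pi / c) * exp (- \<xi>\<^sup>2 / (4 * c)))"
    proof -
      have e1: "complex_of_real pi / complex_of_real c = complex_of_real (pi / c)" by simp
      have e2: "- (complex_of_real \<xi>)\<^sup>2 / (4 * complex_of_real c) = complex_of_real (- \<xi>\<^sup>2 / (4 * c))" by simp
      have e3: "csqrt (complex_of_real (pi / c)) = complex_of_real (sqrt (pi / c))"
        using c by (subst csqrt_of_real_nonneg) auto
      show ?thesis unfolding G_def z e1 e2 e3 exp_of_real by simp
    qed
    ultimately show "gF \<xi> z - G z = 0" by simp
  qed
  then show ?thesis by (simp add: G_def)
qed

lemma lborel_prod_integral:
  fixes h :: "'a::euclidean_space \<Rightarrow> real \<Rightarrow> complex"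
  assumes int: "\<And>b. b \<in> Basis \<Longrightarrow> integrable lborel (h b)"
      and meas[measurable]: "\<And>b. b \<in> Basis \<Longrightarrow> h b \<in> borel_measurable borel"
  shows "integrable lborel (\<lambda>x::'a. \<Prod>b\<in>Basis. h b (x \<bullet> b))"
    and "(LINT x|lborel. (\<Prod>b\<in>Basis. h b (x \<bullet> b))) = (\<Prod>b\<in>Basis. (LINT u|lborel. h b u))"
proof -
  interpret P: product_sigma_finite "\<lambda>_::'a. lborel::real measure"
    by (simp add: product_sigma_finite_def sigma_finite_lborel)
  define T where "T = (\<lambda>f. \<Sum>b\<in>(Basis::'a set). f b *\<^sub>R b)"
  have Tm: "T \<in> measurable (\<Pi>\<^sub>M b\<in>(Basis::'a set). (lborel::real measure)) borel"
    unfolding T_def by measurable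
  have gm: "(\<lambda>x::'a. \<Prod>b\<in>Basis. h b (x \<bullet> b)) \<in> borel_measurable borel" by measurable
  have comp: "(\<Prod>b\<in>Basis. h b (T f \<bullet> b)) = (\<Prod>b\<in>Basis. h b (f b))" for f
  proof (rule prod.cong[OF refl])
    fix b :: 'a assume b: "b \<in> Basis"
    have "T f \<bullet> b = (\<Sum>b'\<in>Basis. f b' * (b' \<bullet> b))" by (simp add: T_def inner_sum_left)
    also have "\<dots> = f b" using b by (simp add: inner_Basis if_distrib cong: if_cong)
    finally show "h b (T f \<bullet> b) = h b (f b)" by simp
  qed
  have L: "(lborel::'a measure) = distr (\<Pi>\<^sub>M b\<in>Basis. lborel) borel T"
    unfolding T_def by (rule lborel_eq)
  have pint: "integrable (\<Pi>\<^sub>M b\<in>(Basis::'a set). (lborel::real measure)) (\<lambda>f. \<Prod>b\<in>Basis. h b (f b))"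
    by (rule P.product_integrable_prod) (auto intro: int)
  show "integrable lborel (\<lambda>x::'a. \<Prod>b\<in>Basis. h b (x \<bullet> b))"
    unfolding L by (subst integrable_distr_eq[OF Tm gm]) (simp add: comp pint)
  show "(LINT x|lborel. (\<Prod>b\<in>Basis. h b (x \<bullet> b))) = (\<Prod>b\<in>Basis. (LINT u|lborel. h b u))"
    unfolding L by (subst integral_distr[OF Tm gm]) (simp add: comp P.product_integral_prod int)
qed


lemma sum_sq_Basis: "(\<Sum>b\<in>Basis. (x \<bullet> b)\<^sup>2) = (norm (x::'a::euclidean_space))\<^sup>2"
proof -
  have "(norm x)\<^sup>2 = x \<bullet> x" by (simp add: power2_norm_eq_inner)
  also have "\<dots> = (\<Sum>b\<in>Basis. (x \<bullet> b)\<^sup>2)" by (subst euclidean_inner) (simp add: power2_eq_square)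
  finally show ?thesis by simp
qed

lemma gauss_d:
  fixes \<xi> :: "'a::euclidean_space" assumes a: "0 < Re a"
  shows "integrable lborel (\<lambda>x::'a. exp (- a * complex_of_real ((norm x)\<^sup>2) - \<i> * complex_of_real (\<xi> \<bullet> x)))"
    and "(LINT x|lborel. exp (- a * complex_of_real ((norm x)\<^sup>2) - \<i> * complex_of_real (\<xi> \<bullet> x)))
         = csqrt (complex_of_real pi / a) ^ DIM('a) * exp (- complex_of_real ((norm \<xi>)\<^sup>2) / (4 * a))"
proof -
  define h where "h = (\<lambda>(b::'a) (u::real). exp (- a * (complex_of_real u)\<^sup>2 - \<i> * complex_of_real ((\<xi> \<bullet> b) * u)))"
  have hint: "integrable lborel (h b)" for b unfolding h_def by (rule gauss_integrable[OF a])
  have hm: "h b \<in> borel_measurable borel" for b unfolding h_def by measurable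
  have pw: "exp (- a * complex_of_real ((norm x)\<^sup>2) - \<i> * complex_of_real (\<xi> \<bullet> x)) = (\<Prod>b\<in>Basis. h b (x \<bullet> b))" for x :: 'a
  proof -
    have "- a * complex_of_real ((norm x)\<^sup>2) - \<i> * complex_of_real (\<xi> \<bullet> x)
        = (\<Sum>b\<in>Basis. - a * (complex_of_real (x \<bullet> b))\<^sup>2 - \<i> * complex_of_real ((\<xi> \<bullet> b) * (x \<bullet> b)))"
      by (simp add: sum_sq_Basis[of x, symmetric] euclidean_inner[of \<xi> x] sum_subtractf sum_distrib_left
            sum_negf)
    then show ?thesis by (simp add: h_def exp_sum)
  qed
  show "integrable lborel (\<lambda>x::'a. exp (- a * complex_of_real ((norm x)\<^sup>2) - \<i> * complex_of_real (\<xi> \<bullet> x)))"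
    unfolding pw by (rule lborel_prod_integral(1)[OF hint hm])
  have "(LINT x|lborel. exp (- a * complex_of_real ((norm x)\<^sup>2) - \<i> * complex_of_real (\<xi> \<bullet> x)))
        = (\<Prod>b\<in>Basis. (LINT u|lborel. h b u))"
    unfolding pw by (rule lborel_prod_integral(2)[OF hint hm])
  also have "\<dots> = (\<Prod>b\<in>(Basis::'a set). csqrt (complex_of_real pi / a) * exp (- (complex_of_real (\<xi> \<bullet> b))\<^sup>2 / (4 * a)))"
    using gF_eq[OF a] by (simp add: h_def gF_def)
  also have "\<dots> = csqrt (complex_of_real pi / a) ^ DIM('a) * exp (\<Sum>b\<in>(Basis::'a set). - (complex_of_real (\<xi> \<bullet> b))\<^sup>2 / (4 * a))"
    by (simp add: prod.distrib exp_sum)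
  also have "(\<Sum>b\<in>(Basis::'a set). - (complex_of_real (\<xi> \<bullet> b))\<^sup>2 / (4 * a)) = - complex_of_real ((norm \<xi>)\<^sup>2) / (4 * a)"
    by (simp add: sum_sq_Basis[of \<xi>, symmetric] sum_divide_distrib[symmetric] sum_negf)
  finally show "(LINT x|lborel. exp (- a * complex_of_real ((norm x)\<^sup>2) - \<i> * complex_of_real (\<xi> \<bullet> x)))
         = csqrt (complex_of_real pi / a) ^ DIM('a) * exp (- complex_of_real ((norm \<xi>)\<^sup>2) / (4 * a))" .
qed


lemma sqrt_pow_powr: "0 < y \<Longrightarrow> sqrt y ^ n = y powr (real n / 2)"
proof -
  assume y: "0 < y"
  have "sqrt y ^ n = (y powr (1/2)) powr real n"
    using y by (simp add: powr_half_sqrt powr_realpow)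
  also have "\<dots> = y powr (real n / 2)" by (simp add: powr_powr)
  finally show ?thesis .
qed

lemma gauss_heat:
  fixes \<xi> :: "'a::euclidean_space" and s :: real assumes s: "0 < s"
  shows "integrable lborel (\<lambda>x::'a. complex_of_real (exp (- (norm x)\<^sup>2 / (2 * s)) / (2 * pi * s) powr (real DIM('a) / 2)) * exp (- \<i> * complex_of_real (\<xi> \<bullet> x)))"
    and "(LINT x|lborel. complex_of_real (exp (- (norm x)\<^sup>2 / (2 * s)) / (2 * pi * s) powr (real DIM('a) / 2)) * exp (- \<i> * complex_of_real (\<xi> \<bullet> x)))
         = complex_of_real (exp (- s * (norm \<xi>)\<^sup>2 / 2))"
proof -
  define a where "a = complex_of_real (1 / (2 * s))"
  define c where "c = 1 / (2 * pi * s) powr (real DIM('a) / 2)"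
  have a: "0 < Re a" using s by (simp add: a_def)
  have pw: "complex_of_real (exp (- (norm x)\<^sup>2 / (2 * s)) / (2 * pi * s) powr (real DIM('a) / 2)) * exp (- \<i> * complex_of_real (\<xi> \<bullet> x))
      = complex_of_real c * exp (- a * complex_of_real ((norm x)\<^sup>2) - \<i> * complex_of_real (\<xi> \<bullet> x))" for x :: 'a
  proof -
    have "- a * complex_of_real ((norm x)\<^sup>2) = complex_of_real (- (norm x)\<^sup>2 / (2 * s))" by (simp add: a_def)
    then show ?thesis by (simp add: c_def exp_diff exp_of_real[symmetric] exp_minus field_simps)
  qed
  show "integrable lborel (\<lambda>x::'a. complex_of_real (exp (- (norm x)\<^sup>2 / (2 * s)) / (2 * pi * s) powr (real DIM('a) / 2)) * exp (- \<i> * complex_of_real (\<xi> \<bullet> x)))"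
    unfolding pw by (intro integrable_mult_right gauss_d(1)[OF a])
  have e1: "complex_of_real pi / a = complex_of_real (2 * pi * s)" by (simp add: a_def)
  have e2: "csqrt (complex_of_real (2 * pi * s)) = complex_of_real (sqrt (2 * pi * s))"
    using s by (subst csqrt_of_real_nonneg) auto
  have e3: "- complex_of_real ((norm \<xi>)\<^sup>2) / (4 * a) = complex_of_real (- s * (norm \<xi>)\<^sup>2 / 2)"
    using s by (simp add: a_def field_simps)
  have e4: "c * sqrt (2 * pi * s) ^ DIM('a) = 1"
    using s by (simp add: c_def sqrt_pow_powr)
  have "(LINT x|lborel. complex_of_real (exp (- (norm x)\<^sup>2 / (2 * s)) / (2 * pi * s) powr (real DIM('a) / 2)) * exp (- \<i> * complex_of_real (\<xi> \<bullet> x)))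
      = complex_of_real c * (csqrt (complex_of_real pi / a) ^ DIM('a) * exp (- complex_of_real ((norm \<xi>)\<^sup>2) / (4 * a)))"
    unfolding pw integral_mult_right_zero gauss_d(2)[OF a] ..
  also have "\<dots> = complex_of_real (c * sqrt (2 * pi * s) ^ DIM('a)) * complex_of_real (exp (- s * (norm \<xi>)\<^sup>2 / 2))"
    unfolding e1 e2 e3 exp_of_real by simp
  finally show "(LINT x|lborel. complex_of_real (exp (- (norm x)\<^sup>2 / (2 * s)) / (2 * pi * s) powr (real DIM('a) / 2)) * exp (- \<i> * complex_of_real (\<xi> \<bullet> x)))
         = complex_of_real (exp (- s * (norm \<xi>)\<^sup>2 / 2))" unfolding e4 by simp
qed

lemma erfc_part:
  fixes t A :: real assumes t: "0 < t"
  shows "(LINT s|lborel. indicator {0<..} s * (exp (- s\<^sup>2 / (2 * t)) / sqrt (2 * pi * t) * exp (- s * A)))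
       = exp (t * A\<^sup>2 / 2) / sqrt pi * (LINT \<tau>:{sqrt (2 * t) * A / 2..}|lborel. exp (- \<tau>\<^sup>2))"
proof -
  define k where "k = sqrt (2 * t)"
  define L where "L = k * A / 2"
  have k: "0 < k" "k * k = 2 * t" using t by (auto simp: k_def)
  define f where "f = (\<lambda>s. indicator {0<..} s * (exp (- s\<^sup>2 / (2 * t)) / sqrt (2 * pi * t) * exp (- s * A)))"
  have "(LINT s|lborel. f s) = \<bar>k\<bar> *\<^sub>R (LINT \<tau>|lborel. f (- t * A + k * \<tau>))"
    by (rule lborel_integral_real_affine) (use k in simp)
  also have "(LINT \<tau>|lborel. f (- t * A + k * \<tau>)) =
      (LINT \<tau>|lborel. exp (t * A\<^sup>2 / 2) / sqrt (2 * pi * t) * (indicator {L..} \<tau> * exp (- \<tau>\<^sup>2)))"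
  proof (rule integral_cong_AE)
    show "(\<lambda>\<tau>. f (- t * A + k * \<tau>)) \<in> borel_measurable lborel" unfolding f_def by measurable
    show "(\<lambda>\<tau>. exp (t * A\<^sup>2 / 2) / sqrt (2 * pi * t) * (indicator {L..} \<tau> * exp (- \<tau>\<^sup>2))) \<in> borel_measurable lborel"
      by measurable
    show "AE \<tau> in lborel. f (- t * A + k * \<tau>) = exp (t * A\<^sup>2 / 2) / sqrt (2 * pi * t) * (indicator {L..} \<tau> * exp (- \<tau>\<^sup>2))"
      using AE_lborel_singleton[of L]
    proof eventually_elim
      fix \<tau> assume "\<tau> \<noteq> L"
      have ind: "(0 < - t * A + k * \<tau>) \<longleftrightarrow> (L \<le> \<tau>) "
      proof -
        have "(0 < - t * A + k * \<tau>) \<longleftrightarrow> t * A < k * \<tau>" by linarith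
        also have "\<dots> \<longleftrightarrow> (k * k / 2) * A < k * \<tau>" using k by simp
        also have "\<dots> \<longleftrightarrow> k * (k * A / 2) < k * \<tau>" by (simp add: algebra_simps)
        also have "\<dots> \<longleftrightarrow> k * A / 2 < \<tau>" using k(1) by (rule mult_less_cancel_left_pos)
        also have "\<dots> \<longleftrightarrow> L \<le> \<tau>" using \<open>\<tau> \<noteq> L\<close> by (auto simp: L_def)
        finally show ?thesis .
      qed
      have ex: "- (- t * A + k * \<tau>)\<^sup>2 / (2 * t) + - (- t * A + k * \<tau>) * A = t * A\<^sup>2 / 2 + - \<tau>\<^sup>2"
      proof -
        have "(- t * A + k * \<tau>)\<^sup>2 = t\<^sup>2 * A\<^sup>2 - 2 * t * A * k * \<tau> + (k * k) * \<tau>\<^sup>2"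
          by (simp add: power2_eq_square algebra_simps)
        also have "\<dots> = t\<^sup>2 * A\<^sup>2 - 2 * t * A * k * \<tau> + 2 * t * \<tau>\<^sup>2" using k by simp
        finally have sq: "(- t * A + k * \<tau>)\<^sup>2 = t\<^sup>2 * A\<^sup>2 - 2 * t * A * k * \<tau> + 2 * t * \<tau>\<^sup>2" .
        show ?thesis unfolding sq using t by (simp add: field_simps power2_eq_square)
      qed
      show "f (- t * A + k * \<tau>) = exp (t * A\<^sup>2 / 2) / sqrt (2 * pi * t) * (indicator {L..} \<tau> * exp (- \<tau>\<^sup>2))"
      proof (cases "L \<le> \<tau>")
        case True
        have ee: "exp (- (- t * A + k * \<tau>)\<^sup>2 / (2 * t)) * exp (- (- t * A + k * \<tau>) * A) = exp (t * A\<^sup>2 / 2) * exp (- \<tau>\<^sup>2)"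
          unfolding mult_exp_exp ex ..
        have "f (- t * A + k * \<tau>) = exp (- (- t * A + k * \<tau>)\<^sup>2 / (2 * t)) * exp (- (- t * A + k * \<tau>) * A) / sqrt (2 * pi * t)"
          unfolding f_def using ind True by (simp add: indicator_def)
        then show ?thesis unfolding ee using True by (simp add: indicator_def)
      next
        case False
        then show ?thesis unfolding f_def using ind by (simp add: indicator_def)
      qed
    qed
  qed
  finally have "(LINT s|lborel. f s) = k * (exp (t * A\<^sup>2 / 2) / sqrt (2 * pi * t)) * (LINT \<tau>:{L..}|lborel. exp (- \<tau>\<^sup>2))"
    using k by (simp add: set_lebesgue_integral_def)
  moreover have "k / sqrt (2 * pi * t) = 1 / sqrt pi"
    using t by (simp add: k_def real_sqrt_mult field_simps)
  ultimately show ?thesis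
    unfolding f_def L_def k_def by (simp add: field_simps)
qed


lemma heat_total:
  fixes s :: real assumes s: "0 < s"
  shows "integrable lborel (\<lambda>x::'a::euclidean_space. exp (- (norm x)\<^sup>2 / (2 * s)) / (2 * pi * s) powr (real DIM('a) / 2))"
    and "(LINT x|lborel. exp (- (norm (x::'a))\<^sup>2 / (2 * s)) / (2 * pi * s) powr (real DIM('a) / 2)) = (1::real)"
proof -
  have i: "integrable lborel (\<lambda>x::'a. complex_of_real (exp (- (norm x)\<^sup>2 / (2 * s)) / (2 * pi * s) powr (real DIM('a) / 2)))"
    using gauss_heat(1)[OF s, of "0::'a"] by simp
  show "integrable lborel (\<lambda>x::'a. exp (- (norm x)\<^sup>2 / (2 * s)) / (2 * pi * s) powr (real DIM('a) / 2))"
    using integrable_Re[OF i] by simp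
  have "complex_of_real (LINT x|lborel. exp (- (norm (x::'a))\<^sup>2 / (2 * s)) / (2 * pi * s) powr (real DIM('a) / 2)) = 1"
    using gauss_heat(2)[OF s, of "0::'a"] by simp
  then show "(LINT x|lborel. exp (- (norm (x::'a))\<^sup>2 / (2 * s)) / (2 * pi * s) powr (real DIM('a) / 2)) = (1::real)"
    by (metis of_real_eq_1_iff)
qed

lemma part_i:
  fixes t :: real and \<xi> :: "'a::euclidean_space" assumes t: "0 < t"
  shows "fourier (\<lambda>x. complex_of_real (btbm_kernel t x)) \<xi> =
            complex_of_real ((2 * pi) powr (- real DIM('a) / 2) * exp (t / 8 * (norm \<xi>) ^ 4)
              * (2 / sqrt pi * (LINT \<tau>:{sqrt (2 * t) * (norm \<xi>)\<^sup>2 / 4..}|lborel. exp (- \<tau>\<^sup>2))))"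
proof -
  define G where "G = (\<lambda>s (x::'a). exp (- (norm x)\<^sup>2 / (2 * s)) / (2 * pi * s) powr (real DIM('a) / 2))"
  define \<rho> where "\<rho> = (\<lambda>s::real. exp (- s\<^sup>2 / (2 * t)) / sqrt (2 * pi * t))"
  define e where "e = (\<lambda>x::'a. exp (- \<i> * complex_of_real (\<xi> \<bullet> x)))"
  define F where "F = (\<lambda>s x. complex_of_real (indicator {0<..} s * (G s x * \<rho> s)) * e x)"
  define A where "A = (norm \<xi>)\<^sup>2 / 2"
  have \<rho>int: "integrable lborel \<rho>"
  proof -
    have "integrable lborel (\<lambda>s. exp (- (1 / (2 * t)) * s\<^sup>2) / sqrt (2 * pi * t))"
      using t by (intro integrable_divide integrable_exp_neg_sq) auto
    then show ?thesis by (simp add: \<rho>_def)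
  qed
  have Gm[measurable]: "(\<lambda>(s, x). F s x) \<in> borel_measurable (lborel \<Otimes>\<^sub>M lborel)"
    unfolding F_def G_def \<rho>_def e_def by measurable
  have inner: "(LINT x|lborel. F s x) = complex_of_real (indicator {0<..} s * (\<rho> s * exp (- s * A)))" for s
  proof (cases "0 < s")
    case True
    have "(LINT x|lborel. F s x) = complex_of_real (\<rho> s) * (LINT x|lborel. complex_of_real (G s x) * e x)"
    proof -
      have "F s x = complex_of_real (\<rho> s) * (complex_of_real (G s x) * e x)" for x
        using True by (simp add: F_def)
      then show ?thesis by (simp only: integral_mult_right_zero)
    qed
    also have "\<dots> = complex_of_real (\<rho> s) * complex_of_real (exp (- s * (norm \<xi>)\<^sup>2 / 2))"
      unfolding G_def e_def by (subst gauss_heat(2)[OF True]) simp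
    finally show ?thesis using True by (simp add: A_def)
  next
    case False then show ?thesis by (simp add: F_def)
  qed
  have intF: "integrable (lborel \<Otimes>\<^sub>M lborel) (\<lambda>(s, x). F s x)"
  proof (rule lborel_pair.Fubini_integrable)
    show "(\<lambda>(s, x). F s x) \<in> borel_measurable (lborel \<Otimes>\<^sub>M lborel)" by (rule Gm)
    have "(\<lambda>s. LINT x|lborel. norm (case (s, x) of (s, x) \<Rightarrow> F s x)) = (\<lambda>s. indicator {0<..} s * \<rho> s)"
    proof
      fix s :: real
      show "(LINT x|lborel. norm (case (s, x) of (s, x) \<Rightarrow> F s x)) = indicator {0<..} s * \<rho> s"
      proof (cases "0 < s")
        case True
        have "(LINT x|lborel. norm (case (s, x) of (s, x) \<Rightarrow> F s x)) = (LINT x|lborel. \<rho> s * G s x)"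
        proof (intro Bochner_Integration.integral_cong refl)
          fix x :: 'a
          have ne: "norm (e x) = 1" by (simp add: e_def)
          show "norm (case (s, x) of (s, x) \<Rightarrow> F s x) = \<rho> s * G s x"
            unfolding case_prod_conv F_def norm_mult norm_of_real ne using True
            using t by (simp add: G_def \<rho>_def abs_mult mult_ac)
        qed
        also have "\<dots> = \<rho> s * (LINT x|lborel. G s x)" by (rule integral_mult_right_zero)
        also have "(LINT x|lborel. G s x) = 1" unfolding G_def by (rule heat_total(2)[OF True])
        finally show ?thesis using True by simp
      next
        case False then show ?thesis by (simp add: F_def)
      qed
    qed
    then show "integrable lborel (\<lambda>s. LINT x|lborel. norm (case (s, x) of (s, x) \<Rightarrow> F s x))"
      using integrable_mult_indicator[OF _ \<rho>int, of "{0<..}"] by simp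
    show "AE s in lborel. integrable lborel (\<lambda>x. case (s, x) of (s, x) \<Rightarrow> F s x)"
    proof (intro AE_I2)
      fix s :: real
      show "integrable lborel (\<lambda>x. case (s, x) of (s, x) \<Rightarrow> F s x)"
      proof (cases "0 < s")
        case True
        have "integrable lborel (\<lambda>x. complex_of_real (\<rho> s) * (complex_of_real (G s x) * e x))"
          unfolding G_def e_def by (intro integrable_mult_right gauss_heat(1)[OF True])
        moreover have "(\<lambda>x. case (s, x) of (s, x) \<Rightarrow> F s x) = (\<lambda>x. complex_of_real (\<rho> s) * (complex_of_real (G s x) * e x))"
          using True by (simp add: F_def fun_eq_iff)
        ultimately show ?thesis by simp
      next
        case False then show ?thesis by (simp add: F_def)
      qed
    qed
  qed
  have btbm: "complex_of_real (btbm_kernel t x) * e x = 2 * (LINT s|lborel. F s x)" for x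
  proof -
    have "btbm_kernel t x = 2 * (LINT s|lborel. indicator {0<..} s * (G s x * \<rho> s))"
      by (simp add: btbm_kernel_def set_lebesgue_integral_def G_def \<rho>_def)
    then have "complex_of_real (btbm_kernel t x) * e x = 2 * ((LINT s|lborel. complex_of_real (indicator {0<..} s * (G s x * \<rho> s))) * e x)"
      unfolding integral_complex_of_real by simp
    also have "\<dots> = 2 * (LINT s|lborel. F s x)"
      unfolding F_def by (simp only: integral_mult_left_zero)
    finally show ?thesis .
  qed
  have "fourier (\<lambda>x. complex_of_real (btbm_kernel t x)) \<xi> = complex_of_real ((2 * pi) powr (- real DIM('a) / 2)) *
        (LINT x|lborel. 2 * (LINT s|lborel. F s x))"
  proof -
    have "fourier (\<lambda>x. complex_of_real (btbm_kernel t x)) \<xi> = complex_of_real ((2 * pi) powr (- real DIM('a) / 2)) *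
        (LINT x|lborel. complex_of_real (btbm_kernel t x) * e x)" by (simp add: fourier_def e_def)
    then show ?thesis unfolding btbm .
  qed
  also have "(LINT x|lborel. 2 * (LINT s|lborel. F s x)) = 2 * (LINT x|lborel. (LINT s|lborel. F s x))"
    by simp
  also have "(LINT x|lborel. (LINT s|lborel. F s x)) = (LINT s|lborel. (LINT x|lborel. F s x))"
    by (rule lborel_pair.Fubini_integral[OF intF])
  also have "\<dots> = (LINT s|lborel. complex_of_real (indicator {0<..} s * (\<rho> s * exp (- s * A))))"
    unfolding inner ..
  also have "\<dots> = complex_of_real (exp (t * A\<^sup>2 / 2) / sqrt pi * (LINT \<tau>:{sqrt (2 * t) * A / 2..}|lborel. exp (- \<tau>\<^sup>2)))"
    unfolding integral_complex_of_real using erfc_part[OF t, of A] by (simp add: \<rho>_def)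
  also have "sqrt (2 * t) * A / 2 = sqrt (2 * t) * (norm \<xi>)\<^sup>2 / 4" by (simp add: A_def)
  also have "t * A\<^sup>2 / 2 = t / 8 * (norm \<xi>) ^ 4" by (simp add: A_def power2_eq_square field_simps power4_eq_xxxx)
  finally show ?thesis by simp
qed

lemma exp_mult_minus_i: "exp p * exp (- \<i> * q) = exp (p - \<i> * q)"
  using mult_exp_exp[of p "- \<i> * q"] by simp

lemma norm_exp_mi: "norm (exp (- \<i> * complex_of_real y)) = 1"
  by simp

lemma norm_exp_gauss: "norm (exp (- a * complex_of_real r)) = exp (- Re a * r)"
  by simp

lemma integrable_exp_Re_sq:
  assumes a: "0 < Re a"
  shows "integrable lborel (\<lambda>x::'a::euclidean_space. exp (- Re a * (norm x)\<^sup>2))"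
proof -
  have "integrable lborel (\<lambda>x::'a. norm (exp (- a * complex_of_real ((norm x)\<^sup>2) - \<i> * complex_of_real ((0::'a) \<bullet> x))))"
    by (intro integrable_norm gauss_d(1)[OF a])
  then show ?thesis by simp
qed

lemma pairing_reg:
  fixes \<psi> :: "'a::euclidean_space \<Rightarrow> complex"
  assumes \<psi>: "integrable lborel \<psi>" and a: "0 < Re a"
  shows "(LINT x|lborel. exp (- a * complex_of_real ((norm x)\<^sup>2)) * fourier \<psi> x) =
     complex_of_real ((2*pi) powr (- real DIM('a)/2)) * (LINT \<xi>|lborel. \<psi> \<xi> *
        (csqrt (complex_of_real pi / a) ^ DIM('a) * exp (- complex_of_real ((norm \<xi>)\<^sup>2) / (4 * a))))"
proof -
  define c where "c = complex_of_real ((2*pi) powr (- real DIM('a)/2))"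
  define g where "g = (\<lambda>(x::'a) (\<xi>::'a). exp (- a * complex_of_real ((norm x)\<^sup>2)) * (\<psi> \<xi> * exp (- \<i> * complex_of_real (\<xi> \<bullet> x))))"
  have \<psi>m[measurable]: "\<psi> \<in> borel_measurable lborel" using \<psi> by (rule borel_measurable_integrable)
  have gm: "(\<lambda>(x, \<xi>). g x \<xi>) \<in> borel_measurable (lborel \<Otimes>\<^sub>M lborel)"
    unfolding g_def by measurable
  have fx: "exp (- a * complex_of_real ((norm x)\<^sup>2)) * fourier \<psi> x = c * (LINT \<xi>|lborel. g x \<xi>)" for x
  proof -
    have "fourier \<psi> x = c * (LINT \<xi>|lborel. \<psi> \<xi> * exp (- \<i> * complex_of_real (\<xi> \<bullet> x)))"
      by (simp add: fourier_def c_def inner_commute)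
    then have "exp (- a * complex_of_real ((norm x)\<^sup>2)) * fourier \<psi> x =
       c * (exp (- a * complex_of_real ((norm x)\<^sup>2)) * (LINT \<xi>|lborel. \<psi> \<xi> * exp (- \<i> * complex_of_real (\<xi> \<bullet> x))))"
      by (simp only: mult.left_commute)
    also have "exp (- a * complex_of_real ((norm x)\<^sup>2)) * (LINT \<xi>|lborel. \<psi> \<xi> * exp (- \<i> * complex_of_real (\<xi> \<bullet> x)))
       = (LINT \<xi>|lborel. g x \<xi>)"
      unfolding g_def by (rule integral_mult_right_zero[symmetric])
    finally show ?thesis .
  qed
  have intg: "integrable (lborel \<Otimes>\<^sub>M lborel) (\<lambda>(x, \<xi>). g x \<xi>)"
  proof (rule lborel_pair.Fubini_integrable)
    show "(\<lambda>(x, \<xi>). g x \<xi>) \<in> borel_measurable (lborel \<Otimes>\<^sub>M lborel)" by (rule gm)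
    have "(\<lambda>x. LINT \<xi>|lborel. norm (case (x, \<xi>) of (x, \<xi>) \<Rightarrow> g x \<xi>)) = (\<lambda>x. exp (- Re a * (norm x)\<^sup>2) * (LINT \<xi>|lborel. norm (\<psi> \<xi>)))"
    proof
      fix x :: 'a
      have "(LINT \<xi>|lborel. norm (case (x, \<xi>) of (x, \<xi>) \<Rightarrow> g x \<xi>)) = (LINT \<xi>|lborel. exp (- Re a * (norm x)\<^sup>2) * norm (\<psi> \<xi>))"
        by (intro Bochner_Integration.integral_cong refl) (simp only: g_def case_prod_conv norm_mult norm_exp_mi mult_1_right, simp only: norm_exp_gauss)
      then show "(LINT \<xi>|lborel. norm (case (x, \<xi>) of (x, \<xi>) \<Rightarrow> g x \<xi>)) = exp (- Re a * (norm x)\<^sup>2) * (LINT \<xi>|lborel. norm (\<psi> \<xi>))"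
        by simp
    qed
    then show "integrable lborel (\<lambda>x. LINT \<xi>|lborel. norm (case (x, \<xi>) of (x, \<xi>) \<Rightarrow> g x \<xi>))"
      using integrable_mult_left[OF integrable_exp_Re_sq[OF a, where 'a='a]] by simp
    show "AE x in lborel. integrable lborel (\<lambda>\<xi>. case (x, \<xi>) of (x, \<xi>) \<Rightarrow> g x \<xi>)"
    proof (intro AE_I2)
      fix x :: 'a
      have "integrable lborel (\<lambda>\<xi>. \<psi> \<xi> * exp (- \<i> * complex_of_real (\<xi> \<bullet> x)))"
        by (rule Bochner_Integration.integrable_bound[OF \<psi>]) (auto simp: norm_mult)
      then show "integrable lborel (\<lambda>\<xi>. case (x, \<xi>) of (x, \<xi>) \<Rightarrow> g x \<xi>)"
        unfolding g_def by simp
    qed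
  qed
  have inner: "(LINT x|lborel. g x \<xi>) = \<psi> \<xi> * (csqrt (complex_of_real pi / a) ^ DIM('a) * exp (- complex_of_real ((norm \<xi>)\<^sup>2) / (4 * a)))" for \<xi>
  proof -
    have "g x \<xi> = \<psi> \<xi> * exp (- a * complex_of_real ((norm x)\<^sup>2) - \<i> * complex_of_real (\<xi> \<bullet> x))" for x
      unfolding g_def exp_mult_minus_i[symmetric] by simp
    then have "(LINT x|lborel. g x \<xi>) = \<psi> \<xi> * (LINT x|lborel. exp (- a * complex_of_real ((norm x)\<^sup>2) - \<i> * complex_of_real (\<xi> \<bullet> x)))"
      by (simp only: integral_mult_right_zero)
    then show ?thesis by (simp only: gauss_d(2)[OF a])
  qed
  have "(LINT x|lborel. exp (- a * complex_of_real ((norm x)\<^sup>2)) * fourier \<psi> x) = c * (LINT x|lborel. (LINT \<xi>|lborel. g x \<xi>))"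
    unfolding fx by simp
  also have "(LINT x|lborel. (LINT \<xi>|lborel. g x \<xi>)) = (LINT \<xi>|lborel. (LINT x|lborel. g x \<xi>))"
    by (rule lborel_pair.Fubini_integral[symmetric]) (use intg in simp)
  finally show ?thesis unfolding inner c_def .
qed


lemma H_bound:
  fixes b :: complex and X r :: real
  assumes b: "0 \<le> Re b" "b \<noteq> 0" and r: "0 < r" "r \<le> norm b" and X: "0 \<le> X"
  shows "norm (csqrt (complex_of_real pi / b) ^ n * exp (- complex_of_real X / (4 * b))) \<le> sqrt (pi / r) ^ n"
proof -
  have "norm (complex_of_real pi / b) \<le> pi / r"
    using b r by (simp add: norm_divide frac_le)
  then have s: "norm (csqrt (complex_of_real pi / b)) \<le> sqrt (pi / r)" by simp
  have "0 \<le> Re (complex_of_real X / (4 * b))"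
    using b X by (simp add: Re_divide)
  then have e: "norm (exp (- complex_of_real X / (4 * b))) \<le> 1" by simp
  have "norm (csqrt (complex_of_real pi / b) ^ n * exp (- complex_of_real X / (4 * b)))
      = norm (csqrt (complex_of_real pi / b)) ^ n * norm (exp (- complex_of_real X / (4 * b)))"
    by (simp add: norm_mult norm_power)
  also have "\<dots> \<le> sqrt (pi / r) ^ n * 1"
    using r by (intro mult_mono power_mono s e) (auto intro!: zero_le_power)
  finally show ?thesis by simp
qed

lemma pairing_lim:
  fixes \<psi> :: "'a::euclidean_space \<Rightarrow> complex"
  assumes \<psi>: "integrable lborel \<psi>" and f\<psi>: "integrable lborel (fourier \<psi>)"
    and a: "0 \<le> Re a" "a \<noteq> 0"
  shows "(LINT x|lborel. exp (- a * complex_of_real ((norm x)\<^sup>2)) * fourier \<psi> x) =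
     complex_of_real ((2*pi) powr (- real DIM('a)/2)) * (LINT \<xi>|lborel. \<psi> \<xi> *
        (csqrt (complex_of_real pi / a) ^ DIM('a) * exp (- complex_of_real ((norm \<xi>)\<^sup>2) / (4 * a))))"
proof -
  define an where "an = (\<lambda>n. a + complex_of_real (inverse (real (Suc n))))"
  define c where "c = complex_of_real ((2*pi) powr (- real DIM('a)/2))"
  define H where "H = (\<lambda>b (\<xi>::'a). csqrt (complex_of_real pi / b) ^ DIM('a) * exp (- complex_of_real ((norm \<xi>)\<^sup>2) / (4 * b)))"
  have \<psi>m[measurable]: "\<psi> \<in> borel_measurable lborel" using \<psi> by (rule borel_measurable_integrable)
  have fm[measurable]: "fourier \<psi> \<in> borel_measurable lborel" using f\<psi> by (rule borel_measurable_integrable)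
  have Rean: "0 < Re (an n)" for n using a by (simp add: an_def add_nonneg_pos)
  have anz: "an n \<noteq> 0" for n using Rean[of n] by auto
  have anlim: "an \<longlonglongrightarrow> a"
    unfolding an_def using tendsto_add[OF tendsto_const tendsto_of_real[OF LIMSEQ_inverse_real_of_nat], of a]
    by simp
  have normge: "norm a \<le> norm (an n)" for n
  proof -
    define d where "d = inverse (real (Suc n))"
    have d: "0 < d" by (simp add: d_def)
    have "(norm a)\<^sup>2 = (Re a)\<^sup>2 + (Im a)\<^sup>2" by (simp add: cmod_power2)
    also have "\<dots> \<le> (Re a + d)\<^sup>2 + (Im a)\<^sup>2" using a d by (simp add: power_mono)
    also have "\<dots> = (norm (an n))\<^sup>2"
    proof -
      have "Re (an n) = Re a + d" "Im (an n) = Im a" unfolding an_def d_def[symmetric] by simp_all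
      then show ?thesis by (simp only: cmod_power2)
    qed
    finally show ?thesis by (simp add: power2_le_iff_abs_le)
  qed
  have eq: "(LINT x|lborel. exp (- an n * complex_of_real ((norm x)\<^sup>2)) * fourier \<psi> x) = c * (LINT \<xi>|lborel. \<psi> \<xi> * H (an n) \<xi>)" for n
    unfolding c_def H_def by (rule pairing_reg[OF \<psi> Rean])
  have L: "(\<lambda>n. LINT x|lborel. exp (- an n * complex_of_real ((norm x)\<^sup>2)) * fourier \<psi> x) \<longlonglongrightarrow>
        (LINT x|lborel. exp (- a * complex_of_real ((norm x)\<^sup>2)) * fourier \<psi> x)"
  proof (rule integral_dominated_convergence[where w = "\<lambda>x. norm (fourier \<psi> x)"])
    show "integrable lborel (\<lambda>x. norm (fourier \<psi> x))" using f\<psi> by (rule integrable_norm)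
    show "AE x in lborel. (\<lambda>n. exp (- an n * complex_of_real ((norm x)\<^sup>2)) * fourier \<psi> x) \<longlonglongrightarrow> exp (- a * complex_of_real ((norm x)\<^sup>2)) * fourier \<psi> x"
      by (intro AE_I2 tendsto_intros anlim)
    fix n
    show "AE x in lborel. norm (exp (- an n * complex_of_real ((norm x)\<^sup>2)) * fourier \<psi> x) \<le> norm (fourier \<psi> x)"
    proof (intro AE_I2)
      fix x :: 'a
      have "norm (exp (- an n * complex_of_real ((norm x)\<^sup>2))) \<le> 1"
        unfolding norm_exp_gauss using Rean[of n] by simp
      then show "norm (exp (- an n * complex_of_real ((norm x)\<^sup>2)) * fourier \<psi> x) \<le> norm (fourier \<psi> x)"
        unfolding norm_mult by (simp add: mult_left_le_one_le)
    qed
  qed auto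
  have R: "(\<lambda>n. LINT \<xi>|lborel. \<psi> \<xi> * H (an n) \<xi>) \<longlonglongrightarrow> (LINT \<xi>|lborel. \<psi> \<xi> * H a \<xi>)"
  proof (rule integral_dominated_convergence[where w = "\<lambda>\<xi>. norm (\<psi> \<xi>) * sqrt (pi / norm a) ^ DIM('a)"])
    show "integrable lborel (\<lambda>\<xi>. norm (\<psi> \<xi>) * sqrt (pi / norm a) ^ DIM('a))"
      using \<psi> by (intro integrable_mult_left integrable_norm)
    have cs: "isCont csqrt (complex_of_real pi / a)"
    proof (rule continuous_at_csqrt)
      have "0 \<le> Re (complex_of_real pi / a)" using a by (simp add: Re_divide)
      moreover have "complex_of_real pi / a \<noteq> 0" using a by simp
      ultimately show "complex_of_real pi / a \<notin> \<real>\<^sub>\<le>\<^sub>0"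
        by (auto simp: complex_nonpos_Reals_iff complex_eq_iff)
    qed
    show "AE \<xi> in lborel. (\<lambda>n. \<psi> \<xi> * H (an n) \<xi>) \<longlonglongrightarrow> \<psi> \<xi> * H a \<xi>"
    proof (intro AE_I2)
      fix \<xi> :: 'a
      have "(\<lambda>n. complex_of_real pi / an n) \<longlonglongrightarrow> complex_of_real pi / a"
        using a by (intro tendsto_intros anlim) auto
      then have c1: "(\<lambda>n. csqrt (complex_of_real pi / an n)) \<longlonglongrightarrow> csqrt (complex_of_real pi / a)"
        by (rule isCont_tendsto_compose[OF cs])
      have c2: "(\<lambda>n. exp (- complex_of_real ((norm \<xi>)\<^sup>2) / (4 * an n))) \<longlonglongrightarrow> exp (- complex_of_real ((norm \<xi>)\<^sup>2) / (4 * a))"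
        using a by (intro tendsto_intros anlim) auto
      show "(\<lambda>n. \<psi> \<xi> * H (an n) \<xi>) \<longlonglongrightarrow> \<psi> \<xi> * H a \<xi>"
        unfolding H_def by (intro tendsto_mult tendsto_const tendsto_power c1 c2)
    qed
    fix n
    show "AE \<xi> in lborel. norm (\<psi> \<xi> * H (an n) \<xi>) \<le> norm (\<psi> \<xi>) * sqrt (pi / norm a) ^ DIM('a)"
    proof (intro AE_I2)
      fix \<xi> :: 'a
      have "norm (H (an n) \<xi>) \<le> sqrt (pi / norm a) ^ DIM('a)"
        unfolding H_def using Rean[of n] anz[of n] a normge[of n]
        by (intro H_bound) auto
      then show "norm (\<psi> \<xi> * H (an n) \<xi>) \<le> norm (\<psi> \<xi>) * sqrt (pi / norm a) ^ DIM('a)"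
        unfolding norm_mult by (intro mult_left_mono) auto
    qed
  qed (auto simp: H_def)
  have "(\<lambda>n. LINT x|lborel. exp (- an n * complex_of_real ((norm x)\<^sup>2)) * fourier \<psi> x) \<longlonglongrightarrow> c * (LINT \<xi>|lborel. \<psi> \<xi> * H a \<xi>)"
    unfolding eq by (intro tendsto_intros R)
  from LIMSEQ_unique[OF L this] show ?thesis unfolding c_def H_def .
qed

lemma csqrt_pow_powr:
  assumes z: "z \<noteq> 0"
  shows "csqrt z ^ n = z powr complex_of_real (real n / 2)"
proof -
  have "csqrt z ^ n = exp (Ln z / 2) ^ n" using z by (simp add: csqrt_exp_Ln)
  also have "\<dots> = exp (of_nat n * (Ln z / 2))" by (rule exp_of_nat_mult[symmetric])
  also have "of_nat n * (Ln z / 2) = complex_of_real (real n / 2) * ln z" by simp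
  finally show ?thesis using z by (simp add: powr_def)
qed

lemma inner_s:
  fixes \<psi> :: "'a::euclidean_space \<Rightarrow> complex" and s :: real
  assumes \<psi>: "integrable lborel \<psi>" and f\<psi>: "integrable lborel (fourier \<psi>)" and s: "s \<noteq> 0"
  shows "(LINT x|lborel. lks_integrand \<epsilon> \<theta> t s x * fourier \<psi> x) =
     complex_of_real ((2*pi) powr (- real DIM('a)/2)) * (LINT \<xi>|lborel. \<psi> \<xi> *
        (complex_of_real (exp (- s\<^sup>2 / (2 * \<epsilon> * t)) / sqrt (2 * pi * \<epsilon> * t)) *
         exp (\<i> * complex_of_real ((\<theta> - (norm \<xi>)\<^sup>2 / 2) * s))))"
proof -
  define a where "a = 1 / (2 * \<i> * complex_of_real s)"
  define P where "P = (2 * complex_of_real pi * \<i> * complex_of_real s) powr complex_of_real (real DIM('a) / 2)"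
  define r where "r = complex_of_real (exp (- s\<^sup>2 / (2 * \<epsilon> * t)) / sqrt (2 * pi * \<epsilon> * t))"
  define K where "K = exp (\<i> * complex_of_real (\<theta> * s)) / P * r"
  define c where "c = complex_of_real ((2*pi) powr (- real DIM('a)/2))"
  have aeq: "a = - \<i> * complex_of_real (1 / (2 * s))"
    using s by (simp add: a_def field_simps)
  have a0: "0 \<le> Re a" "a \<noteq> 0" using s by (simp_all add: aeq)
  have pa: "complex_of_real pi / a = 2 * complex_of_real pi * \<i> * complex_of_real s"
    by (simp add: a_def)
  have Pnz: "P \<noteq> 0" using s by (simp add: P_def)
  have cs: "csqrt (complex_of_real pi / a) ^ DIM('a) = P"
    unfolding pa P_def using s by (intro csqrt_pow_powr) simp
  have pw: "lks_integrand \<epsilon> \<theta> t s x * fourier \<psi> x = K * (exp (- a * complex_of_real ((norm x)\<^sup>2)) * fourier \<psi> x)" for x :: 'a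
  proof -
    have "- complex_of_real ((norm x)\<^sup>2) / (2 * \<i> * complex_of_real s) = - a * complex_of_real ((norm x)\<^sup>2)"
      by (simp add: a_def)
    then show ?thesis by (simp add: lks_integrand_def K_def P_def r_def)
  qed
  have ex: "exp (- complex_of_real ((norm \<xi>)\<^sup>2) / (4 * a)) = exp (- \<i> * complex_of_real (s * (norm \<xi>)\<^sup>2 / 2))" for \<xi> :: 'a
  proof -
    have "- complex_of_real ((norm \<xi>)\<^sup>2) / (4 * a) = - \<i> * complex_of_real (s * (norm \<xi>)\<^sup>2 / 2)"
      using s by (simp add: a_def field_simps)
    then show ?thesis by (rule arg_cong)
  qed
  have comb: "K * (\<psi> \<xi> * (P * exp (- \<i> * complex_of_real (s * (norm \<xi>)\<^sup>2 / 2)))) =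
       \<psi> \<xi> * (r * exp (\<i> * complex_of_real ((\<theta> - (norm \<xi>)\<^sup>2 / 2) * s)))" for \<xi> :: 'a
  proof -
    have "exp (\<i> * complex_of_real (\<theta> * s)) * exp (- \<i> * complex_of_real (s * (norm \<xi>)\<^sup>2 / 2))
       = exp (\<i> * complex_of_real ((\<theta> - (norm \<xi>)\<^sup>2 / 2) * s))"
      unfolding exp_mult_minus_i by (simp add: algebra_simps)
    then show ?thesis using Pnz unfolding K_def by (simp add: field_simps)
  qed
  have "(LINT x|lborel. lks_integrand \<epsilon> \<theta> t s x * fourier \<psi> x) = K * (LINT x|lborel. exp (- a * complex_of_real ((norm x)\<^sup>2)) * fourier \<psi> x)"
    unfolding pw by (rule integral_mult_right_zero)
  also have "\<dots> = K * (c * (LINT \<xi>|lborel. \<psi> \<xi> * (P * exp (- \<i> * complex_of_real (s * (norm \<xi>)\<^sup>2 / 2)))))"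
    unfolding pairing_lim[OF \<psi> f\<psi> a0] cs ex c_def ..
  also have "\<dots> = c * (LINT \<xi>|lborel. K * (\<psi> \<xi> * (P * exp (- \<i> * complex_of_real (s * (norm \<xi>)\<^sup>2 / 2)))))"
    by (simp only: integral_mult_right_zero mult.left_commute)
  also have "\<dots> = c * (LINT \<xi>|lborel. \<psi> \<xi> * (r * exp (\<i> * complex_of_real ((\<theta> - (norm \<xi>)\<^sup>2 / 2) * s))))"
    unfolding comb ..
  finally show ?thesis unfolding c_def r_def .
qed


lemma aux_div: "complex_of_real (e / q) * E = complex_of_real (1 / q) * (complex_of_real e * E)"
proof -
  have "e / q = (1 / q) * e" by simp
  then have "complex_of_real (e / q) = complex_of_real (1 / q) * complex_of_real e"
    by (simp only: of_real_mult[symmetric])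
  then show ?thesis by (simp only: mult.assoc)
qed

lemma norm_exp_pi: "norm (exp (\<i> * complex_of_real y)) = 1"
  by simp

lemma gauss_char:
  fixes \<sigma> \<omega> :: real assumes \<sigma>: "0 < \<sigma>"
  shows "(LINT s|lborel. complex_of_real (exp (- s\<^sup>2 / (2 * \<sigma>)) / sqrt (2 * pi * \<sigma>)) * exp (\<i> * complex_of_real (\<omega> * s)))
     = complex_of_real (exp (- \<sigma> * \<omega>\<^sup>2 / 2))"
proof -
  define c where "c = 1 / (2 * \<sigma>)"
  have c: "0 < c" using \<sigma> by (simp add: c_def)
  have pw: "complex_of_real (exp (- s\<^sup>2 / (2 * \<sigma>)) / sqrt (2 * pi * \<sigma>)) * exp (\<i> * complex_of_real (\<omega> * s))
     = complex_of_real (1 / sqrt (2 * pi * \<sigma>)) * exp (- complex_of_real c * (complex_of_real s)\<^sup>2 - \<i> * complex_of_real (- \<omega> * s))" for s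
  proof -
    have "exp (- complex_of_real c * (complex_of_real s)\<^sup>2 - \<i> * complex_of_real (- \<omega> * s))
        = exp (complex_of_real (- s\<^sup>2 / (2 * \<sigma>))) * exp (\<i> * complex_of_real (\<omega> * s))"
    proof -
      have "- complex_of_real c * (complex_of_real s)\<^sup>2 - \<i> * complex_of_real (- \<omega> * s)
          = complex_of_real (- s\<^sup>2 / (2 * \<sigma>)) + \<i> * complex_of_real (\<omega> * s)"
        by (simp add: c_def)
      then show ?thesis by (simp only: exp_add)
    qed
    then show ?thesis by (simp only: exp_of_real) (rule aux_div)
  qed
  have "(LINT s|lborel. complex_of_real (exp (- s\<^sup>2 / (2 * \<sigma>)) / sqrt (2 * pi * \<sigma>)) * exp (\<i> * complex_of_real (\<omega> * s)))
      = complex_of_real (1 / sqrt (2 * pi * \<sigma>)) * complex_of_real (sqrt (pi / c) * exp (- (- \<omega>)\<^sup>2 / (4 * c)))"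
    unfolding pw integral_mult_right_zero gauss_real[OF c] ..
  also have "sqrt (pi / c) = sqrt (2 * pi * \<sigma>)" by (simp add: c_def)
  also have "- (- \<omega>)\<^sup>2 / (4 * c) = - \<sigma> * \<omega>\<^sup>2 / 2" using \<sigma> by (simp add: c_def field_simps)
  finally have X: "(LINT s|lborel. complex_of_real (exp (- s\<^sup>2 / (2 * \<sigma>)) / sqrt (2 * pi * \<sigma>)) * exp (\<i> * complex_of_real (\<omega> * s)))
     = complex_of_real (1 / sqrt (2 * pi * \<sigma>)) * complex_of_real (sqrt (2 * pi * \<sigma>) * exp (- \<sigma> * \<omega>\<^sup>2 / 2))" .
  have Y: "1 / sqrt (2 * pi * \<sigma>) * (sqrt (2 * pi * \<sigma>) * exp (- \<sigma> * \<omega>\<^sup>2 / 2)) = exp (- \<sigma> * \<omega>\<^sup>2 / 2)"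
    using \<sigma> by simp
  show ?thesis unfolding X of_real_mult[symmetric] Y ..
qed

lemma part_ii:
  fixes \<psi> :: "'a::euclidean_space \<Rightarrow> complex"
  assumes t: "0 < t" and \<epsilon>: "0 < \<epsilon>" and \<psi>: "integrable lborel \<psi>" and f\<psi>: "integrable lborel (fourier \<psi>)"
  shows "lks_pairing \<epsilon> \<theta> t (fourier \<psi>) =
            (LINT \<xi>|lborel. complex_of_real ((2 * pi) powr (- real DIM('a) / 2)
                 * exp (- (\<epsilon> * t / 8) * (- 2 * \<theta> + (norm \<xi>)\<^sup>2)\<^sup>2)) * \<psi> \<xi>)"
proof -
  define r where "r = (\<lambda>s::real. exp (- s\<^sup>2 / (2 * \<epsilon> * t)) / sqrt (2 * pi * \<epsilon> * t))"
  define k where "k = (\<lambda>(s::real) (\<xi>::'a). \<psi> \<xi> * (complex_of_real (r s) * exp (\<i> * complex_of_real ((\<theta> - (norm \<xi>)\<^sup>2 / 2) * s))))"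
  define c where "c = complex_of_real ((2*pi) powr (- real DIM('a)/2))"
  define J where "J = (\<lambda>s. c * (LINT \<xi>|lborel. k s \<xi>))"
  define I where "I = (\<lambda>s. LINT x|lborel. lks_integrand \<epsilon> \<theta> t s x * fourier \<psi> x)"
  have \<psi>m[measurable]: "\<psi> \<in> borel_measurable lborel" using \<psi> by (rule borel_measurable_integrable)
  have et: "0 < \<epsilon> * t" using t \<epsilon> by simp
  have rint: "integrable lborel r"
  proof -
    have "integrable lborel (\<lambda>s. exp (- (1 / (2 * \<epsilon> * t)) * s\<^sup>2) / sqrt (2 * pi * \<epsilon> * t))"
      using et by (intro integrable_divide integrable_exp_neg_sq) auto
    then show ?thesis by (simp add: r_def)
  qed
  have r0: "0 \<le> r s" for s using t \<epsilon> by (auto simp: r_def intro!: divide_nonneg_nonneg)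
  have IJ: "I s = J s" if "s \<noteq> 0" for s
    unfolding I_def J_def k_def r_def c_def using inner_s[OF \<psi> f\<psi> that] by simp
  have intk: "integrable (lborel \<Otimes>\<^sub>M lborel) (\<lambda>(s, \<xi>). k s \<xi>)"
  proof (rule lborel_pair.Fubini_integrable)
    show "(\<lambda>(s, \<xi>). k s \<xi>) \<in> borel_measurable (lborel \<Otimes>\<^sub>M lborel)"
      unfolding k_def r_def by measurable
    have "(\<lambda>s. LINT \<xi>|lborel. norm (case (s, \<xi>) of (s, \<xi>) \<Rightarrow> k s \<xi>)) = (\<lambda>s. r s * (LINT \<xi>|lborel. norm (\<psi> \<xi>)))"
    proof
      fix s :: real
      have "(LINT \<xi>|lborel. norm (case (s, \<xi>) of (s, \<xi>) \<Rightarrow> k s \<xi>)) = (LINT \<xi>|lborel. r s * norm (\<psi> \<xi>))"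
        by (intro Bochner_Integration.integral_cong refl) (simp add: k_def norm_mult r0)
      then show "(LINT \<xi>|lborel. norm (case (s, \<xi>) of (s, \<xi>) \<Rightarrow> k s \<xi>)) = r s * (LINT \<xi>|lborel. norm (\<psi> \<xi>))"
        by simp
    qed
    then show "integrable lborel (\<lambda>s. LINT \<xi>|lborel. norm (case (s, \<xi>) of (s, \<xi>) \<Rightarrow> k s \<xi>))"
      using integrable_mult_left[OF rint] by simp
    show "AE s in lborel. integrable lborel (\<lambda>\<xi>. case (s, \<xi>) of (s, \<xi>) \<Rightarrow> k s \<xi>)"
    proof (intro AE_I2)
      fix s :: real
      show "integrable lborel (\<lambda>\<xi>. case (s, \<xi>) of (s, \<xi>) \<Rightarrow> k s \<xi>)"
      proof -
        have "integrable lborel (\<lambda>\<xi>. r s *\<^sub>R \<psi> \<xi>)" using \<psi> by simp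
        moreover have "k s \<in> borel_measurable lborel" unfolding k_def r_def by measurable
        moreover have "norm (k s \<xi>) = norm (r s *\<^sub>R \<psi> \<xi>)" for \<xi>
          unfolding k_def norm_mult norm_of_real norm_exp_pi norm_scaleR using r0[of s] by (simp add: mult.commute)
        ultimately have "integrable lborel (k s)"
          using Bochner_Integration.integrable_bound[of lborel "\<lambda>\<xi>. r s *\<^sub>R \<psi> \<xi>" "k s"] by (simp only: order_refl AE_I2)
        then show ?thesis by simp
      qed
    qed
  qed
  have intJ: "integrable lborel J"
  proof -
    have "integrable lborel (\<lambda>s. LINT \<xi>|lborel. (\<lambda>(s, \<xi>). k s \<xi>) (s, \<xi>))"
      by (rule lborel_pair.integrable_fst'[OF intk])
    then show ?thesis unfolding J_def by (intro integrable_mult_right) simp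
  qed
  have "lks_pairing \<epsilon> \<theta> t (fourier \<psi>) = (LINT s|lborel. indicator {..0} s *\<^sub>R I s) + (LINT s|lborel. indicator {0..} s *\<^sub>R I s)"
    by (simp add: lks_pairing_def set_lebesgue_integral_def I_def)
  also have "(LINT s|lborel. indicator {..0} s *\<^sub>R I s) = (LINT s|lborel. indicator {..0} s *\<^sub>R J s)"
    by (rule integral_discrete_difference[where X = "{0}"]) (auto simp: IJ)
  also have "(LINT s|lborel. indicator {0..} s *\<^sub>R I s) = (LINT s|lborel. indicator {0..} s *\<^sub>R J s)"
    by (rule integral_discrete_difference[where X = "{0}"]) (auto simp: IJ)
  also have "(LINT s|lborel. indicator {..0} s *\<^sub>R J s) + (LINT s|lborel. indicator {0..} s *\<^sub>R J s)
      = (LINT s|lborel. indicator {..0} s *\<^sub>R J s + indicator {0..} s *\<^sub>R J s)"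
    by (rule Bochner_Integration.integral_add[symmetric]) (auto intro!: integrable_mult_indicator intJ)
  also have "\<dots> = (LINT s|lborel. J s)"
    by (rule integral_discrete_difference[where X = "{0}"]) (auto simp: indicator_def)
  also have "\<dots> = c * (LINT s|lborel. (LINT \<xi>|lborel. k s \<xi>))"
    unfolding J_def by (rule integral_mult_right_zero)
  also have "(LINT s|lborel. (LINT \<xi>|lborel. k s \<xi>)) = (LINT \<xi>|lborel. (LINT s|lborel. k s \<xi>))"
    by (rule lborel_pair.Fubini_integral[symmetric]) (use intk in simp)
  also have "\<dots> = (LINT \<xi>|lborel. \<psi> \<xi> * complex_of_real (exp (- (\<epsilon> * t) * (\<theta> - (norm \<xi>)\<^sup>2 / 2)\<^sup>2 / 2)))"
  proof (intro Bochner_Integration.integral_cong refl)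
    fix \<xi> :: 'a
    have "(LINT s|lborel. k s \<xi>) = \<psi> \<xi> * (LINT s|lborel. complex_of_real (exp (- s\<^sup>2 / (2 * (\<epsilon> * t))) / sqrt (2 * pi * (\<epsilon> * t))) * exp (\<i> * complex_of_real ((\<theta> - (norm \<xi>)\<^sup>2 / 2) * s)))"
      unfolding k_def r_def by (simp only: integral_mult_right_zero mult.assoc)
    also have "\<dots> = \<psi> \<xi> * complex_of_real (exp (- (\<epsilon> * t) * (\<theta> - (norm \<xi>)\<^sup>2 / 2)\<^sup>2 / 2))"
      unfolding gauss_char[OF et] ..
    finally show "(LINT s|lborel. k s \<xi>) = \<psi> \<xi> * complex_of_real (exp (- (\<epsilon> * t) * (\<theta> - (norm \<xi>)\<^sup>2 / 2)\<^sup>2 / 2))" .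
  qed
  also have "c * \<dots> = (LINT \<xi>|lborel. c * (\<psi> \<xi> * complex_of_real (exp (- (\<epsilon> * t) * (\<theta> - (norm \<xi>)\<^sup>2 / 2)\<^sup>2 / 2))))"
    by (rule integral_mult_right_zero[symmetric])
  also have "\<dots> = (LINT \<xi>|lborel. complex_of_real ((2 * pi) powr (- real DIM('a) / 2)
                 * exp (- (\<epsilon> * t / 8) * (- 2 * \<theta> + (norm \<xi>)\<^sup>2)\<^sup>2)) * \<psi> \<xi>)"
  proof (intro Bochner_Integration.integral_cong refl)
    fix \<xi> :: 'a
    have "- (\<epsilon> * t) * (\<theta> - (norm \<xi>)\<^sup>2 / 2)\<^sup>2 / 2 = - (\<epsilon> * t / 8) * (- 2 * \<theta> + (norm \<xi>)\<^sup>2)\<^sup>2"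
      by (simp add: power2_eq_square field_simps)
    then show "c * (\<psi> \<xi> * complex_of_real (exp (- (\<epsilon> * t) * (\<theta> - (norm \<xi>)\<^sup>2 / 2)\<^sup>2 / 2))) =
        complex_of_real ((2 * pi) powr (- real DIM('a) / 2) * exp (- (\<epsilon> * t / 8) * (- 2 * \<theta> + (norm \<xi>)\<^sup>2)\<^sup>2)) * \<psi> \<xi>"
      unfolding c_def by simp
  qed
  finally show ?thesis .
qed

theorem lemma2p1:
  fixes t \<epsilon> \<theta> :: real
  assumes "t > 0" and "\<epsilon> > 0"
  shows "(\<forall>\<xi>::'a::euclidean_space.
            fourier (\<lambda>x. complex_of_real (btbm_kernel t x)) \<xi> =
            complex_of_real ((2 * pi) powr (- real DIM('a) / 2) * exp (t / 8 * (norm \<xi>) ^ 4)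
              * (2 / sqrt pi * (LINT \<tau>:{sqrt (2 * t) * (norm \<xi>)\<^sup>2 / 4..}|lborel. exp (- \<tau>\<^sup>2)))))
       \<and> (\<forall>\<psi>::'a \<Rightarrow> complex. integrable lborel \<psi> \<longrightarrow> integrable lborel (fourier \<psi>) \<longrightarrow>
            lks_pairing \<epsilon> \<theta> t (fourier \<psi>) =
            (LINT \<xi>|lborel. complex_of_real ((2 * pi) powr (- real DIM('a) / 2)
                 * exp (- (\<epsilon> * t / 8) * (- 2 * \<theta> + (norm \<xi>)\<^sup>2)\<^sup>2)) * \<psi> \<xi>))"
  using part_i[OF assms(1)] part_ii[OF assms(1) assms(2)] by blast

end
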